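(* Consider the ride-hailing model in the context and a demand vector $\bm b^C$ with $0\le b^C_i\le b_i$ for all $i$. If $(\bm w^C,\bm x^C)$ is a CV equilibrium for $\bm b^C$, then $\bm x^C$ is an optimal solution of the convex program $\mathcal{CV}(\bm b^C)$ and $\bm w^C$ is a vector of Lagrange multipliers of its capacity constraints $\sum_{j}x_{ji}\le b^C_i$.
   Context: Model. There are $L$ regions $\{1,\dots,L\}$. For regions $i,j$, $b_{ij}\ge0$ is the rate of customers from $i$ to $j$; $b_i=\sum_j b_{ij}$ (assumed $>0$), $q_{ij}=b_{ij}/b_i$. Travel times satisfy $t_{ij}>0$ for $i\neq j$, $t_{ii}=0$. Constants: $p>0$, $c\ge0$, $R\in(0,1)$, CV fleet mass $N>0$. For $i,\alpha$: $\tau^{dr}_{i\alpha}=t_{i\alpha}+\sum_j q_{\alpha j}t_{\alpha j}$ and $r^C_{i\alpha}=p(1-R)\sum_j q_{\alpha j}t_{\alpha j}-c\tau^{dr}_{i\alpha}$. A matrix $\bm x=(x_{i\alpha})\in\mathbb R^{L\times L}_{\ge0}$ satisfies flow balance if $\sum_j(\sum_k x_{kj})q_{ji}=\sum_\alpha x_{i\alpha}$ for all $i$. CV equilibrium for $\bm b^C$: a pair $(\bm w^C,\bm x^C)$, $\bm w^C\in\mathbb R^L_{\ge0}$, $\bm x^C\in\mathbb R^{L\times L}_{\ge0}$, such that (i) $\bm x^C$ maximizes $\sum_{i,\alpha}r^C_{i\alpha}x_{i\alpha}$ over all $\bm x\ge0$ satisfying flow balance and $\sum_{i,\alpha}(\tau^{dr}_{i\alpha}+w^C_\alpha)x_{i\alpha}=N$;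 (ii) $\sum_j x^C_{ji}\le b^C_i$ for all $i$; (iii) $w^C_i(b^C_i-\sum_j x^C_{ji})=0$ for all $i$. $\mathcal{CV}(\bm b^C)$: maximize $N\log\sum_{i,\alpha}r^C_{i\alpha}x_{i\alpha}-\sum_{i,\alpha}\tau^{dr}_{i\alpha}x_{i\alpha}$ over $\bm x\ge0$ satisfying flow balance and $\sum_j x_{ji}\le b^C_i$ for all $i$. *)

theory Defs
  imports Complex_Main "HOL-Library.Extended_Real"
begin

definition bsum :: "('r::finite \<Rightarrow> 'r \<Rightarrow> real) \<Rightarrow> 'r \<Rightarrow> real" where
  "bsum b i = (\<Sum>j\<in>UNIV. b i j)"

definition qmat :: "('r::finite \<Rightarrow> 'r \<Rightarrow> real) \<Rightarrow> 'r \<Rightarrow> 'r \<Rightarrow> real" where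
  "qmat b i j = b i j / bsum b i"

definition tau_dr :: "('r::finite \<Rightarrow> 'r \<Rightarrow> real) \<Rightarrow> ('r \<Rightarrow> 'r \<Rightarrow> real) \<Rightarrow> 'r \<Rightarrow> 'r \<Rightarrow> real" where
  "tau_dr b t i a = t i a + (\<Sum>j\<in>UNIV. qmat b a j * t a j)"

definition rC :: "real \<Rightarrow> real \<Rightarrow> real \<Rightarrow> ('r::finite \<Rightarrow> 'r \<Rightarrow> real) \<Rightarrow> ('r \<Rightarrow> 'r \<Rightarrow> real)
                  \<Rightarrow> 'r \<Rightarrow> 'r \<Rightarrow> real" where
  "rC p R c b t i a = p * (1 - R) * (\<Sum>j\<in>UNIV. qmat b a j * t a j) - c * tau_dr b t i a"

definition nonneg_mat :: "('r \<Rightarrow> 'r \<Rightarrow> real) \<Rightarrow> bool" where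
  "nonneg_mat x \<longleftrightarrow> (\<forall>i a. 0 \<le> x i a)"

definition flow_balance :: "('r::finite \<Rightarrow> 'r \<Rightarrow> real) \<Rightarrow> ('r \<Rightarrow> 'r \<Rightarrow> real) \<Rightarrow> bool" where
  "flow_balance b x \<longleftrightarrow>
     (\<forall>i. (\<Sum>j\<in>UNIV. (\<Sum>k\<in>UNIV. x k j) * qmat b j i) = (\<Sum>a\<in>UNIV. x i a))"

definition inflow :: "('r::finite \<Rightarrow> 'r \<Rightarrow> real) \<Rightarrow> 'r \<Rightarrow> real" where
  "inflow x i = (\<Sum>j\<in>UNIV. x j i)"

definition CV_equilibrium ::
  "real \<Rightarrow> real \<Rightarrow> real \<Rightarrow> real \<Rightarrow> ('r::finite \<Rightarrow> 'r \<Rightarrow> real) \<Rightarrow> ('r \<Rightarrow> 'r \<Rightarrow> real)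
   \<Rightarrow> ('r \<Rightarrow> real) \<Rightarrow> ('r \<Rightarrow> real) \<Rightarrow> ('r \<Rightarrow> 'r \<Rightarrow> real) \<Rightarrow> bool" where
  "CV_equilibrium p R c N b t bC w x \<longleftrightarrow>
     (\<forall>i. 0 \<le> w i) \<and>
     \<comment> \<open>(i)\<close>
     (nonneg_mat x \<and> flow_balance b x \<and>
      (\<Sum>i\<in>UNIV. \<Sum>a\<in>UNIV. (tau_dr b t i a + w a) * x i a) = N \<and>
      (\<forall>y. nonneg_mat y \<and> flow_balance b y \<and>
           (\<Sum>i\<in>UNIV. \<Sum>a\<in>UNIV. (tau_dr b t i a + w a) * y i a) = N \<longrightarrow>
           (\<Sum>i\<in>UNIV. \<Sum>a\<in>UNIV. rC p R c b t i a * y i a)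
             \<le> (\<Sum>i\<in>UNIV. \<Sum>a\<in>UNIV. rC p R c b t i a * x i a))) \<and>
     \<comment> \<open>(ii)\<close>
     (\<forall>i. inflow x i \<le> bC i) \<and>
     \<comment> \<open>(iii)\<close>
     (\<forall>i. w i * (bC i - inflow x i) = 0)"

text \<open>Objective of CV(bC), with the standard convention log s = -\<infinity> for s \<le> 0
  (the domain of the concave objective is r\<cdot>x > 0).\<close>
definition CV_obj :: "real \<Rightarrow> real \<Rightarrow> real \<Rightarrow> real \<Rightarrow> ('r::finite \<Rightarrow> 'r \<Rightarrow> real)
   \<Rightarrow> ('r \<Rightarrow> 'r \<Rightarrow> real) \<Rightarrow> ('r \<Rightarrow> 'r \<Rightarrow> real) \<Rightarrow> ereal" where
  "CV_obj p R c N b t x =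
     (let s = (\<Sum>i\<in>UNIV. \<Sum>a\<in>UNIV. rC p R c b t i a * x i a) in
      if s > 0 then ereal (N * ln s - (\<Sum>i\<in>UNIV. \<Sum>a\<in>UNIV. tau_dr b t i a * x i a))
      else -\<infinity>)"

definition CV_feasible :: "('r::finite \<Rightarrow> 'r \<Rightarrow> real) \<Rightarrow> ('r \<Rightarrow> real) \<Rightarrow> ('r \<Rightarrow> 'r \<Rightarrow> real) \<Rightarrow> bool" where
  "CV_feasible b bC x \<longleftrightarrow> nonneg_mat x \<and> flow_balance b x \<and> (\<forall>i. inflow x i \<le> bC i)"

definition CV_optimal :: "real \<Rightarrow> real \<Rightarrow> real \<Rightarrow> real \<Rightarrow> ('r::finite \<Rightarrow> 'r \<Rightarrow> real)
   \<Rightarrow> ('r \<Rightarrow> 'r \<Rightarrow> real) \<Rightarrow> ('r \<Rightarrow> real) \<Rightarrow> ('r \<Rightarrow> 'r \<Rightarrow> real) \<Rightarrow> bool" where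
  "CV_optimal p R c N b t bC x \<longleftrightarrow>
     CV_feasible b bC x \<and>
     (\<forall>y. CV_feasible b bC y \<longrightarrow> CV_obj p R c N b t y \<le> CV_obj p R c N b t x)"

definition CV_lagrange_multipliers :: "real \<Rightarrow> real \<Rightarrow> real \<Rightarrow> real \<Rightarrow> ('r::finite \<Rightarrow> 'r \<Rightarrow> real)
   \<Rightarrow> ('r \<Rightarrow> 'r \<Rightarrow> real) \<Rightarrow> ('r \<Rightarrow> real) \<Rightarrow> ('r \<Rightarrow> 'r \<Rightarrow> real) \<Rightarrow> ('r \<Rightarrow> real) \<Rightarrow> bool" where
  "CV_lagrange_multipliers p R c N b t bC x w \<longleftrightarrow>
     (\<forall>i. 0 \<le> w i) \<and>
     (\<forall>i. w i * (bC i - inflow x i) = 0) \<and>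
     (\<forall>y. nonneg_mat y \<and> flow_balance b y \<longrightarrow>
        CV_obj p R c N b t y - ereal (\<Sum>i\<in>UNIV. w i * (inflow y i - bC i))
          \<le> CV_obj p R c N b t x - ereal (\<Sum>i\<in>UNIV. w i * (inflow x i - bC i)))"

end

theory Submission
  imports Defs
begin

theorem proposition1:
  fixes b t :: "'r::finite \<Rightarrow> 'r \<Rightarrow> real"
    and p c R N :: real
    and bC wC :: "'r \<Rightarrow> real"
    and xC :: "'r \<Rightarrow> 'r \<Rightarrow> real"
  assumes b_nonneg: "\<forall>i j. 0 \<le> b i j"
    and b_pos: "\<forall>i. 0 < bsum b i"
    and t_pos: "\<forall>i j. i \<noteq> j \<longrightarrow> 0 < t i j"
    and t_diag: "\<forall>i. t i i = 0"
    and p_pos: "0 < p" and c_nonneg: "0 \<le> c"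
    and R_pos: "0 < R" and R_lt1: "R < 1"
    and N_pos: "0 < N"
    and bC_bounds: "\<forall>i. 0 \<le> bC i \<and> bC i \<le> bsum b i"
    and equil: "CV_equilibrium p R c N b t bC wC xC"
  shows "CV_optimal p R c N b t bC xC \<and> CV_lagrange_multipliers p R c N b t bC xC wC"
proof -
  define S where "S y = (\<Sum>i\<in>UNIV. \<Sum>a\<in>UNIV. rC p R c b t i a * y i a)" for y :: "'r \<Rightarrow> 'r \<Rightarrow> real"
  define T where "T y = (\<Sum>i\<in>UNIV. \<Sum>a\<in>UNIV. tau_dr b t i a * y i a)" for y :: "'r \<Rightarrow> 'r \<Rightarrow> real"
  define D where "D y = (\<Sum>i\<in>UNIV. \<Sum>a\<in>UNIV. (tau_dr b t i a + wC a) * y i a)" for y :: "'r \<Rightarrow> 'r \<Rightarrow> real"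
  define Lw where "Lw y = (\<Sum>i\<in>UNIV. wC i * (inflow y i - bC i))" for y :: "'r \<Rightarrow> 'r \<Rightarrow> real"
  have wnn: "\<And>i. 0 \<le> wC i" using equil unfolding CV_equilibrium_def by blast
  have xnn: "nonneg_mat xC" and xfb: "flow_balance b xC" and xD: "D xC = N"
    and xmax: "\<And>y. nonneg_mat y \<Longrightarrow> flow_balance b y \<Longrightarrow> D y = N \<Longrightarrow> S y \<le> S xC"
    and xin: "\<And>i. inflow xC i \<le> bC i" and xcs: "\<And>i. wC i * (bC i - inflow xC i) = 0"
    using equil unfolding CV_equilibrium_def D_def S_def by blast+
  have tnn: "\<And>i j. 0 \<le> t i j" using t_pos t_diag
    by (metis less_eq_real_def order_refl)
  have qnn: "\<And>i j. 0 \<le> qmat b i j" unfolding qmat_def using b_nonneg b_pos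
    by (simp add: less_imp_le)
  have mnn: "\<And>a. 0 \<le> (\<Sum>j\<in>UNIV. qmat b a j * t a j)"
    by (intro sum_nonneg mult_nonneg_nonneg qnn tnn)
  have taunn: "\<And>i a. 0 \<le> tau_dr b t i a" unfolding tau_dr_def using mnn tnn
    by (simp add: add_nonneg_nonneg)
  have pR: "0 \<le> p * (1 - R)" using p_pos R_lt1 by simp
  have rle: "\<And>i a. rC p R c b t i a \<le> p * (1 - R) * tau_dr b t i a"
  proof -
    fix i a
    have "c * tau_dr b t i a \<ge> 0" using c_nonneg taunn by simp
    moreover have "p * (1 - R) * (\<Sum>j\<in>UNIV. qmat b a j * t a j) \<le> p * (1 - R) * tau_dr b t i a"
      using pR tnn unfolding tau_dr_def by (intro mult_left_mono) auto
    ultimately show "rC p R c b t i a \<le> p * (1 - R) * tau_dr b t i a"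
      unfolding rC_def by linarith
  qed
  have DT: "D y = T y + (\<Sum>i\<in>UNIV. wC i * inflow y i)" for y
  proof -
    have "D y = T y + (\<Sum>i\<in>UNIV. \<Sum>a\<in>UNIV. wC a * y i a)"
      unfolding D_def T_def by (simp add: distrib_right sum.distrib)
    also have "(\<Sum>i\<in>UNIV. \<Sum>a\<in>UNIV. wC a * y i a) = (\<Sum>a\<in>UNIV. \<Sum>i\<in>UNIV. wC a * y i a)"
      by (rule sum.swap)
    also have "\<dots> = (\<Sum>i\<in>UNIV. wC i * inflow y i)"
      unfolding inflow_def by (simp add: sum_distrib_left)
    finally show ?thesis .
  qed
  have Dnn: "0 \<le> D y" if "nonneg_mat y" for y
    using that wnn taunn unfolding D_def nonneg_mat_def
    by (intro sum_nonneg mult_nonneg_nonneg add_nonneg_nonneg) auto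
  have SD: "S y \<le> p * (1 - R) * D y" if "nonneg_mat y" for y
  proof -
    have "S y \<le> (\<Sum>i\<in>UNIV. \<Sum>a\<in>UNIV. p * (1 - R) * ((tau_dr b t i a + wC a) * y i a))"
      unfolding S_def
    proof (intro sum_mono)
      fix i a
      have "rC p R c b t i a \<le> p * (1 - R) * (tau_dr b t i a + wC a)"
        using rle[of i a] pR wnn[of a] by (smt (verit) mult_left_mono)
      then show "rC p R c b t i a * y i a \<le> p * (1 - R) * ((tau_dr b t i a + wC a) * y i a)"
        using that unfolding nonneg_mat_def by (metis mult.assoc mult_right_mono)
    qed
    also have "\<dots> = p * (1 - R) * D y" unfolding D_def by (simp add: sum_distrib_left)
    finally show ?thesis .
  qed
  have key: "0 < S xC \<and> N * ln (S y) - D y \<le> N * ln (S xC) - N"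
    if yn: "nonneg_mat y" and yf: "flow_balance b y" and Sy: "0 < S y" for y
  proof -
    have Dpos: "0 < D y"
    proof (rule ccontr)
      assume "\<not> 0 < D y"
      then have "D y = 0" using Dnn[OF yn] by simp
      then show False using SD[OF yn] Sy by simp
    qed
    define k where "k = N / D y"
    have kpos: "0 < k" unfolding k_def using Dpos N_pos by simp
    define y' where "y' i a = k * y i a" for i a
    have y'n: "nonneg_mat y'" using yn kpos unfolding nonneg_mat_def y'_def by simp
    have y'f: "flow_balance b y'" using yf unfolding flow_balance_def y'_def
      by (simp add: sum_distrib_left[symmetric] mult.assoc)
    have "D y' = k * D y" unfolding D_def y'_def
      by (simp add: sum_distrib_left mult_ac)
    then have y'D: "D y' = N" unfolding k_def using Dpos by simp
    have "S y' = k * S y" unfolding S_def y'_def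
      by (simp add: sum_distrib_left mult_ac)
    then have le: "k * S y \<le> S xC" using xmax[OF y'n y'f y'D] by simp
    have Sxpos: "0 < S xC" using le kpos Sy by (smt (verit) mult_pos_pos)
    have "S y \<le> S xC * (D y / N)" using le unfolding k_def using Dpos N_pos
      by (simp add: field_simps)
    then have "ln (S y) \<le> ln (S xC * (D y / N))"
      using Sy by simp
    also have "\<dots> = ln (S xC) + ln (D y / N)" using Sxpos Dpos N_pos by (intro ln_mult_pos) auto
    also have "\<dots> \<le> ln (S xC) + (D y / N - 1)" using ln_le_minus_one[of "D y / N"] Dpos N_pos by simp
    finally have "N * ln (S y) \<le> N * (ln (S xC) + (D y / N - 1))"
      using N_pos by (intro mult_left_mono) auto
    also have "\<dots> = N * ln (S xC) + D y - N" using N_pos by (simp add: field_simps)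
    finally show ?thesis using Sxpos by simp
  qed
  have objS: "CV_obj p R c N b t y = (if S y > 0 then ereal (N * ln (S y) - T y) else -\<infinity>)" for y
    unfolding CV_obj_def S_def T_def Let_def by simp
  have LwD: "T y + Lw y = D y - (\<Sum>i\<in>UNIV. wC i * bC i)" for y
    unfolding Lw_def DT by (simp add: right_diff_distrib sum_subtractf)
  have Lx0: "\<And>i. wC i * (inflow xC i - bC i) = 0" using xcs
    by (metis minus_diff_eq mult_minus_right neg_equal_0_iff_equal)
  have Lx: "Lw xC = 0" unfolding Lw_def by (rule sum.neutral) (use Lx0 in blast)
  have lag: "CV_obj p R c N b t y - ereal (Lw y) \<le> CV_obj p R c N b t xC - ereal (Lw xC)"
    if yn: "nonneg_mat y" and yf: "flow_balance b y" for y
  proof (cases "S y > 0")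
    case False
    then show ?thesis by (simp add: objS)
  next
    case True
    from key[OF yn yf True] have k1: "0 < S xC" and k2: "N * ln (S y) - D y \<le> N * ln (S xC) - N" by auto
    have "N * ln (S y) - T y - Lw y \<le> N * ln (S xC) - T xC - Lw xC"
      using k2 LwD[of y] LwD[of xC] xD by linarith
    then show ?thesis using True k1 by (simp add: objS)
  qed
  have opt: "CV_obj p R c N b t y \<le> CV_obj p R c N b t xC" if "CV_feasible b bC y" for y
  proof -
    have yn: "nonneg_mat y" and yf: "flow_balance b y" and yin: "\<And>i. inflow y i \<le> bC i"
      using that unfolding CV_feasible_def by auto
    have "Lw y \<le> 0" unfolding Lw_def using yin wnn
      by (intro sum_nonpos) (simp add: mult_nonneg_nonpos)
    then have "CV_obj p R c N b t y \<le> CV_obj p R c N b t y - ereal (Lw y)"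
      by (cases "CV_obj p R c N b t y") auto
    also have "\<dots> \<le> CV_obj p R c N b t xC - ereal (Lw xC)" by (rule lag[OF yn yf])
    also have "\<dots> = CV_obj p R c N b t xC" using Lx by (simp add: zero_ereal_def[symmetric])
    finally show ?thesis .
  qed
  have "CV_feasible b bC xC" unfolding CV_feasible_def using xnn xfb xin by blast
  then show ?thesis
    unfolding CV_optimal_def CV_lagrange_multipliers_def
    using opt lag wnn xcs unfolding Lw_def by blast
qed

end
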